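(* Let $A=(a_{ij}), B=(b_{ij})\in\mathbb{R}^{n\times n}_+$ be Schur-stable extended Leslie matrices, i.e. entrywise nonnegative matrices whose only possibly nonzero entries are those in the first row, the subdiagonal entries $(i,i-1)$ for $2\le i\le n$, and the $(n,n)$ entry. Let $\mathcal{L}_{A,B}$ be the set of entrywise nonnegative matrices $D\in\mathbb{R}^{n\times n}$ whose only possibly nonzero entries are the subdiagonal entries $d_{i,i-1}$ ($2\le i\le n$) and the entry $d_{nn}$, and such that $A-D\ge 0$ and $B-D\ge 0$ entrywise. Let $\mathcal{L}^1_{A,B}$ be the set of those $D\in\mathcal{L}_{A,B}$ that have only one non-zero row (all other rows zero). Then for every $D\in\mathcal{L}^1_{A,B}$ the matrix $$M=\begin{pmatrix} A-D & D\\ D & B-D\end{pmatrix}$$ is Schur-stable.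
   Context: A real square matrix is Schur-stable if its spectral radius is strictly less than $1$. $\mathbb{R}^{n\times n}_+$ denotes the set of entrywise nonnegative $n\times n$ real matrices; inequalities between matrices are entrywise. *)

theory Defs
  imports "Jordan_Normal_Form.Spectral_Radius"
begin

(* Indices are 0-based: row/column i of the paper is i-1 here. *)

definition nonneg_mat :: "real mat \<Rightarrow> bool" where
  "nonneg_mat A \<longleftrightarrow> (\<forall>i<dim_row A. \<forall>j<dim_col A. A $$ (i,j) \<ge> 0)"

definition schur_stable :: "real mat \<Rightarrow> bool" where
  "schur_stable A \<longleftrightarrow> spectral_radius (map_mat complex_of_real A) < 1"

definition extended_leslie :: "nat \<Rightarrow> real mat \<Rightarrow> bool" where
  "extended_leslie n A \<longleftrightarrow> A \<in> carrier_mat n n \<and> nonneg_mat A \<and>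
     (\<forall>i<n. \<forall>j<n. A $$ (i,j) \<noteq> 0 \<longrightarrow> i = 0 \<or> i = j + 1 \<or> (i = n - 1 \<and> j = n - 1))"

definition L_set :: "nat \<Rightarrow> real mat \<Rightarrow> real mat \<Rightarrow> real mat set" where
  "L_set n A B = {D. D \<in> carrier_mat n n \<and> nonneg_mat D \<and>
     (\<forall>i<n. \<forall>j<n. D $$ (i,j) \<noteq> 0 \<longrightarrow> i = j + 1 \<or> (i = n - 1 \<and> j = n - 1)) \<and>
     nonneg_mat (A - D) \<and> nonneg_mat (B - D)}"

definition L1_set :: "nat \<Rightarrow> real mat \<Rightarrow> real mat \<Rightarrow> real mat set" where
  "L1_set n A B = {D \<in> L_set n A B. \<exists>k<n. (\<exists>j<n. D $$ (k,j) \<noteq> 0) \<and>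
     (\<forall>i<n. i \<noteq> k \<longrightarrow> (\<forall>j<n. D $$ (i,j) = 0))}"

end

theory Submission
  imports Defs
begin

lemma smult_pow_mat:
  assumes "C \<in> carrier_mat n n"
  shows "(r \<cdot>\<^sub>m C) ^\<^sub>m k = (r ^ k) \<cdot>\<^sub>m (C ^\<^sub>m k :: 'a :: comm_ring_1 mat)"
proof (induct k)
  case 0 then show ?case using assms by (auto intro!: eq_matI)
next
  case (Suc k)
  have "(r \<cdot>\<^sub>m C) ^\<^sub>m Suc k = (r ^ k \<cdot>\<^sub>m C ^\<^sub>m k) * (r \<cdot>\<^sub>m C)" using Suc by simp
  also have "\<dots> = (r ^ Suc k) \<cdot>\<^sub>m (C ^\<^sub>m Suc k)"
    using assms by (intro eq_matI) (auto simp: scalar_prod_def sum_distrib_left ac_simps)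
  finally show ?case .
qed

lemma eig_scale:
  fixes A :: "complex mat"
  assumes A: "A \<in> carrier_mat n n" and ev: "eigenvalue ((1/r) \<cdot>\<^sub>m A) mu" and r: "r \<noteq> 0"
  shows "eigenvalue A (r * mu)"
proof -
  from ev obtain v where v: "eigenvector ((1/r) \<cdot>\<^sub>m A) v mu" unfolding eigenvalue_def by auto
  hence vc: "v \<in> carrier_vec n" "v \<noteq> 0\<^sub>v n" and eq: "((1/r) \<cdot>\<^sub>m A) *\<^sub>v v = mu \<cdot>\<^sub>v v"
    using A unfolding eigenvector_def by auto
  have "A *\<^sub>v v = (r * mu) \<cdot>\<^sub>v v"
  proof (rule eq_vecI)
    fix i assume i: "i < dim_vec ((r * mu) \<cdot>\<^sub>v v)"
    hence i': "i < n" using vc by auto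
    have "(((1/r) \<cdot>\<^sub>m A) *\<^sub>v v) $ i = (mu \<cdot>\<^sub>v v) $ i" using eq by simp
    hence "(1/r) * (row A i \<bullet> v) = mu * v $ i" using i' A vc
      by (simp add: scalar_prod_def sum_distrib_left ac_simps)
    hence "row A i \<bullet> v = r * mu * v $ i" using r by (simp add: field_simps)
    thus "(A *\<^sub>v v) $ i = ((r * mu) \<cdot>\<^sub>v v) $ i" using i' A vc by simp
  qed (use A vc in auto)
  thus ?thesis unfolding eigenvalue_def eigenvector_def using A vc by auto
qed


lemma pow_decay:
  fixes A :: "complex mat"
  assumes A: "A \<in> carrier_mat n n" and n: "n > 0" and sr: "spectral_radius A < 1"
  shows "\<exists>c r. 0 < r \<and> r < 1 \<and> (\<forall>k i j. i < n \<longrightarrow> j < n \<longrightarrow> norm ((A ^\<^sub>m k) $$ (i,j)) \<le> c * r ^ k)"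
proof -
  define s where "s = spectral_radius A"
  have s0: "s \<ge> 0" using spectral_radius_mem_max(1)[OF A n] unfolding s_def by auto
  define r where "r = (s + 1) / 2"
  have r0: "r > 0" and r1: "r < 1" and sr': "s < r" using s0 sr unfolding r_def s_def by auto
  define C where "C = (1 / complex_of_real r) \<cdot>\<^sub>m A"
  have C: "C \<in> carrier_mat n n" using A unfolding C_def by auto
  have "spectral_radius C \<in> norm ` spectrum C" by (rule spectral_radius_mem_max(1)[OF C n])
  then obtain mu where mu: "mu \<in> spectrum C" and eqmu: "spectral_radius C = norm mu" by auto
  have "eigenvalue A (complex_of_real r * mu)"
    using eig_scale[OF A _ ] mu r0 unfolding C_def spectrum_def by auto
  hence "norm (complex_of_real r * mu) \<in> norm ` spectrum A" unfolding spectrum_def by auto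
  from spectral_radius_mem_max(2)[OF A n this] have "r * norm mu \<le> s"
    using r0 unfolding s_def by (simp add: norm_mult)
  hence "r * norm mu < r * 1" using sr' by auto
  hence "norm mu < 1" using r0 by (simp only: mult_less_cancel_left_pos)
  hence "spectral_radius C < 1" using eqmu by simp
  from spectral_radius_jnf_norm_bound_less_1_upper_triangular[OF C this]
  obtain c where c: "\<And>k. norm_bound (C ^\<^sub>m k) c" by auto
  have AC: "A = complex_of_real r \<cdot>\<^sub>m C" using A r0 unfolding C_def by (auto intro!: eq_matI)
  have "\<forall>k i j. i < n \<longrightarrow> j < n \<longrightarrow> norm ((A ^\<^sub>m k) $$ (i,j)) \<le> c * r ^ k"
  proof (intro allI impI)
    fix k i j assume i: "i < n" and j: "j < n"
    have "(A ^\<^sub>m k) $$ (i,j) = complex_of_real r ^ k * (C ^\<^sub>m k) $$ (i,j)"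
      unfolding AC smult_pow_mat[OF C] using i j C by simp
    hence "norm ((A ^\<^sub>m k) $$ (i,j)) = r ^ k * norm ((C ^\<^sub>m k) $$ (i,j))"
      using r0 by (simp add: norm_mult norm_power)
    also have "\<dots> \<le> r ^ k * c"
      using c[of k] i j C unfolding norm_bound_def using r0 by (intro mult_left_mono) auto
    finally show "norm ((A ^\<^sub>m k) $$ (i,j)) \<le> c * r ^ k" by (simp add: ac_simps)
  qed
  thus ?thesis using r0 r1 by blast
qed

lemma pow_Suc_index:
  assumes A: "A \<in> carrier_mat n n" and i: "i < n" and j: "j < n"
  shows "(A ^\<^sub>m Suc m) $$ (i,j) = (\<Sum>l<n. (A ^\<^sub>m m) $$ (i,l) * A $$ (l,j))"
  using A i j by (simp add: scalar_prod_def atLeast0LessThan)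

lemma pow_nonneg:
  fixes A :: "real mat"
  assumes A: "A \<in> carrier_mat n n" and nn: "nonneg_mat A"
  shows "i < n \<Longrightarrow> j < n \<Longrightarrow> (A ^\<^sub>m m) $$ (i,j) \<ge> 0"
proof (induct m arbitrary: i j)
  case 0 thus ?case using A by auto
next
  case (Suc m)
  have "(\<Sum>l<n. (A ^\<^sub>m m) $$ (i,l) * A $$ (l,j)) \<ge> 0"
    using Suc nn A unfolding nonneg_mat_def by (intro sum_nonneg mult_nonneg_nonneg) auto
  thus ?case using pow_Suc_index[OF A Suc(2,3)] by simp
qed

lemma left_vec:
  fixes A :: "real mat"
  assumes A: "A \<in> carrier_mat n n" and n: "n > 0" and nn: "nonneg_mat A" and st: "schur_stable A"
  shows "\<exists>x. (\<forall>i<n. x i > 0) \<and> (\<forall>j<n. (\<Sum>i<n. x i * A $$ (i,j)) < x j)"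
proof -
  let ?Ac = "map_mat complex_of_real A"
  have Ac: "?Ac \<in> carrier_mat n n" using A by auto
  from pow_decay[OF Ac n st[unfolded schur_stable_def]] obtain c r where
    r: "0 < r" "r < 1" and bd: "\<And>k i j. i < n \<Longrightarrow> j < n \<Longrightarrow> norm ((?Ac ^\<^sub>m k) $$ (i,j)) \<le> c * r ^ k"
    by blast
  have pw: "?Ac ^\<^sub>m k = map_mat complex_of_real (A ^\<^sub>m k)" for k
    by (rule of_real_hom.mat_hom_pow[OF A, symmetric])
  have bd': "\<bar>(A ^\<^sub>m k) $$ (i,j)\<bar> \<le> c * r ^ k" if "i < n" "j < n" for k i j
    using bd[OF that, of k] that A unfolding pw by simp
  have "(\<lambda>k. c * r ^ k) \<longlonglongrightarrow> c * 0"
    by (intro tendsto_mult tendsto_const LIMSEQ_power_zero) (use r in auto)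
  hence "\<forall>\<^sub>F k in sequentially. c * r ^ k < 1 / real n" using n
    by (intro order_tendstoD) auto
  then obtain N0 where N0: "\<And>k. k \<ge> N0 \<Longrightarrow> c * r ^ k < 1 / real n"
    unfolding eventually_sequentially by auto
  define N where "N = Suc N0"
  have N: "c * r ^ N < 1 / real n" using N0[of N] unfolding N_def by linarith
  define S where "S m j = (\<Sum>i<n. (A ^\<^sub>m m) $$ (i,j))" for m j
  define x where "x j = (\<Sum>m<N. S m j)" for j
  have S0: "S 0 j = 1" if "j < n" for j
  proof -
    have "S 0 j = (\<Sum>i<n. if i = j then 1 else 0)" unfolding S_def using A that
      by (intro sum.cong) auto
    thus ?thesis using that by simp
  qed
  have Snn: "S m j \<ge> 0" if "j < n" for m j
    unfolding S_def using pow_nonneg[OF A nn] that by (intro sum_nonneg) auto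
  have SN: "S N j < 1" if j: "j < n" for j
  proof -
    have "S N j \<le> (\<Sum>i<n. c * r ^ N)" unfolding S_def
      using bd' j by (intro sum_mono) (auto simp: abs_le_iff)
    also have "\<dots> = real n * (c * r ^ N)" by simp
    also have "\<dots> < real n * (1 / real n)" using N n by (intro mult_strict_left_mono) auto
    also have "\<dots> = 1" using n by simp
    finally show ?thesis .
  qed
  have "\<forall>i<n. x i > 0"
  proof (intro allI impI)
    fix i assume i: "i < n"
    have "x i = S 0 i + (\<Sum>m<N0. S (Suc m) i)" unfolding x_def N_def
      by (subst sum.lessThan_Suc_shift) simp
    moreover have "(\<Sum>m<N0. S (Suc m) i) \<ge> 0" using Snn i by (intro sum_nonneg) auto
    ultimately show "x i > 0" using S0 i by simp
  qed
  moreover have "\<forall>j<n. (\<Sum>i<n. x i * A $$ (i,j)) < x j"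
  proof (intro allI impI)
    fix j assume j: "j < n"
    have "(\<Sum>i<n. x i * A $$ (i,j)) = (\<Sum>m<N. \<Sum>i<n. \<Sum>l<n. (A ^\<^sub>m m) $$ (l,i) * A $$ (i,j))"
      unfolding x_def S_def sum_distrib_right by (rule sum.swap)
    also have "\<dots> = (\<Sum>m<N. S (Suc m) j)"
      unfolding S_def
    proof (rule sum.cong[OF refl])
      fix m
      have "(\<Sum>i<n. \<Sum>l<n. (A ^\<^sub>m m) $$ (l,i) * A $$ (i,j)) = (\<Sum>l<n. \<Sum>i<n. (A ^\<^sub>m m) $$ (l,i) * A $$ (i,j))"
        by (rule sum.swap)
      also have "\<dots> = (\<Sum>l<n. (A ^\<^sub>m Suc m) $$ (l,j))"
      proof (rule sum.cong[OF refl])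
        fix l assume "l \<in> {..<n}"
        thus "(\<Sum>i<n. (A ^\<^sub>m m) $$ (l,i) * A $$ (i,j)) = (A ^\<^sub>m Suc m) $$ (l,j)"
          using pow_Suc_index[OF A _ j, of l m] by simp
      qed
      finally show "(\<Sum>i<n. \<Sum>l<n. (A ^\<^sub>m m) $$ (l,i) * A $$ (i,j)) = (\<Sum>l<n. (A ^\<^sub>m Suc m) $$ (l,j))" .
    qed
    also have "\<dots> = x j - S 0 j + S N j" unfolding x_def
      using sum.lessThan_Suc_shift[of "\<lambda>m. S m j" N] sum.lessThan_Suc[of "\<lambda>m. S m j" N] by simp
    also have "\<dots> < x j" using S0[OF j] SN[OF j] by simp
    finally show "(\<Sum>i<n. x i * A $$ (i,j)) < x j" .
  qed
  ultimately show ?thesis by blast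
qed


lemma stable_from_vec:
  fixes M :: "real mat"
  assumes M: "M \<in> carrier_mat N N" and N: "N > 0" and nn: "nonneg_mat M"
    and zpos: "\<And>i. i < N \<Longrightarrow> z i > 0"
    and zM: "\<And>j. j < N \<Longrightarrow> (\<Sum>i<N. z i * M $$ (i,j)) < z j"
  shows "schur_stable M"
proof (rule ccontr)
  let ?Mc = "map_mat complex_of_real M"
  have Mc: "?Mc \<in> carrier_mat N N" using M by auto
  assume "\<not> schur_stable M"
  hence ge: "spectral_radius ?Mc \<ge> 1" unfolding schur_stable_def by auto
  from spectral_radius_mem_max(1)[OF Mc N] obtain lam where
    lam: "lam \<in> spectrum ?Mc" and eql: "spectral_radius ?Mc = norm lam" by auto
  from lam obtain v where "eigenvector ?Mc v lam" unfolding spectrum_def eigenvalue_def by auto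
  hence v: "v \<in> carrier_vec N" "v \<noteq> 0\<^sub>v N" and ev: "?Mc *\<^sub>v v = lam \<cdot>\<^sub>v v"
    using M unfolding eigenvector_def by auto
  have l1: "norm lam \<ge> 1" using ge eql by simp
  define w where "w i = norm (v $ i)" for i
  have w0: "w i \<ge> 0" for i unfolding w_def by simp
  have wle: "w i \<le> (\<Sum>j<N. M $$ (i,j) * w j)" if i: "i < N" for i
  proof -
    have "(?Mc *\<^sub>v v) $ i = (lam \<cdot>\<^sub>v v) $ i" using ev by simp
    hence "(\<Sum>j<N. complex_of_real (M $$ (i,j)) * v $ j) = lam * v $ i"
      using i M v by (simp add: scalar_prod_def atLeast0LessThan)
    hence "norm lam * w i = norm (\<Sum>j<N. complex_of_real (M $$ (i,j)) * v $ j)"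
      unfolding w_def by (simp add: norm_mult)
    also have "\<dots> \<le> (\<Sum>j<N. norm (complex_of_real (M $$ (i,j)) * v $ j))" by (rule norm_sum)
    also have "\<dots> = (\<Sum>j<N. M $$ (i,j) * w j)"
      using nn M i unfolding nonneg_mat_def w_def by (intro sum.cong refl) (auto simp: norm_mult)
    finally have "norm lam * w i \<le> (\<Sum>j<N. M $$ (i,j) * w j)" .
    moreover have "w i \<le> norm lam * w i" using l1 w0[of i] by (simp add: mult_le_cancel_right1)
    ultimately show ?thesis by linarith
  qed
  from v obtain j0 where j0: "j0 < N" "v $ j0 \<noteq> 0" by (auto simp: vec_eq_iff)
  have "(\<Sum>i<N. z i * w i) \<le> (\<Sum>i<N. z i * (\<Sum>j<N. M $$ (i,j) * w j))"
    using wle zpos by (intro sum_mono mult_left_mono) (auto simp: less_imp_le)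
  also have "\<dots> = (\<Sum>j<N. (\<Sum>i<N. z i * M $$ (i,j)) * w j)"
  proof -
    have "(\<Sum>i<N. z i * (\<Sum>j<N. M $$ (i,j) * w j)) = (\<Sum>i<N. \<Sum>j<N. z i * M $$ (i,j) * w j)"
      by (simp add: sum_distrib_left mult.assoc)
    also have "\<dots> = (\<Sum>j<N. \<Sum>i<N. z i * M $$ (i,j) * w j)" by (rule sum.swap)
    also have "\<dots> = (\<Sum>j<N. (\<Sum>i<N. z i * M $$ (i,j)) * w j)" by (simp add: sum_distrib_right)
    finally show ?thesis .
  qed
  also have "\<dots> < (\<Sum>j<N. z j * w j)"
  proof (rule sum_strict_mono_ex1)
    show "\<forall>j\<in>{..<N}. (\<Sum>i<N. z i * M $$ (i,j)) * w j \<le> z j * w j"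
    proof
      fix j assume "j \<in> {..<N}"
      hence "(\<Sum>i<N. z i * M $$ (i,j)) \<le> z j" using zM by (simp add: less_imp_le)
      thus "(\<Sum>i<N. z i * M $$ (i,j)) * w j \<le> z j * w j" using w0[of j] by (rule mult_right_mono)
    qed
    have "w j0 > 0" using j0 unfolding w_def by simp
    thus "\<exists>j\<in>{..<N}. (\<Sum>i<N. z i * M $$ (i,j)) * w j < z j * w j"
      using zM[OF j0(1)] j0 by (intro bexI[of _ j0]) auto
  qed simp
  finally show False by simp
qed


lemma sum_split2: "(\<Sum>i<(a::nat)+b. f i) = (\<Sum>i<a. f i) + (\<Sum>i<b. f (a+i))"
  by (induct b) (simp_all add: ac_simps)

theorem theorem4:
  fixes n :: nat and A B D :: "real mat"
  assumes "0 < n"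
    and "extended_leslie n A" and "extended_leslie n B"
    and "schur_stable A" and "schur_stable B"
    and "D \<in> L1_set n A B"
  shows "schur_stable (four_block_mat (A - D) D D (B - D))"
proof -
  note n = assms(1)
  have A: "A \<in> carrier_mat n n" and nA: "nonneg_mat A" using assms(2) unfolding extended_leslie_def by auto
  have B: "B \<in> carrier_mat n n" and nB: "nonneg_mat B" using assms(3) unfolding extended_leslie_def by auto
  have D: "D \<in> carrier_mat n n" and nD: "nonneg_mat D" and nAD: "nonneg_mat (A - D)" and nBD: "nonneg_mat (B - D)"
    using assms(6) unfolding L1_set_def L_set_def by auto
  from assms(6) obtain k where k: "k < n" and Dk: "\<And>i j. i < n \<Longrightarrow> j < n \<Longrightarrow> i \<noteq> k \<Longrightarrow> D $$ (i,j) = 0"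
    unfolding L1_set_def by auto
  from left_vec[OF A n nA assms(4)] obtain x where xpos: "\<And>i. i < n \<Longrightarrow> x i > 0"
    and xA: "\<And>j. j < n \<Longrightarrow> (\<Sum>i<n. x i * A $$ (i,j)) < x j" by blast
  from left_vec[OF B n nB assms(5)] obtain y where ypos: "\<And>i. i < n \<Longrightarrow> y i > 0"
    and yB: "\<And>j. j < n \<Longrightarrow> (\<Sum>i<n. y i * B $$ (i,j)) < y j" by blast
  have xk: "x k > 0" and yk: "y k > 0" using xpos ypos k by auto
  define z where "z i = (if i < n then y k * x i else x k * y (i - n))" for i
  define M where "M = four_block_mat (A - D) D D (B - D)"
  have M: "M \<in> carrier_mat (n + n) (n + n)" unfolding M_def using A B D by auto
  have Mij: "M $$ (i,j) = (if i < n then if j < n then A $$ (i,j) - D $$ (i,j) else D $$ (i, j - n)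
      else if j < n then D $$ (i - n, j) else B $$ (i - n, j - n) - D $$ (i - n, j - n))"
    if "i < n + n" "j < n + n" for i j
    using that A B D unfolding M_def by auto
  have nM: "nonneg_mat M"
    unfolding nonneg_mat_def
  proof (intro allI impI)
    fix i j assume i: "i < dim_row M" and j: "j < dim_col M"
    hence i': "i < n + n" and j': "j < n + n" using M by auto
    have a: "A $$ (i',j'') - D $$ (i',j'') \<ge> 0" if "i' < n" "j'' < n" for i' j''
      using nAD that A D unfolding nonneg_mat_def by auto
    have b: "B $$ (i',j'') - D $$ (i',j'') \<ge> 0" if "i' < n" "j'' < n" for i' j''
      using nBD that B D unfolding nonneg_mat_def by auto
    have d: "D $$ (i',j'') \<ge> 0" if "i' < n" "j'' < n" for i' j''
      using nD that D unfolding nonneg_mat_def by auto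
    show "M $$ (i,j) \<ge> 0" unfolding Mij[OF i' j'] using a b d i' j' by auto
  qed
  have zpos: "z i > 0" if "i < n + n" for i
    using that xpos ypos xk yk unfolding z_def by auto
  have zM: "(\<Sum>i<n+n. z i * M $$ (i,j)) < z j" if j: "j < n + n" for j
  proof (cases "j < n")
    case True
    have "(\<Sum>i<n+n. z i * M $$ (i,j)) = (\<Sum>i<n. z i * M $$ (i,j) + z (n+i) * M $$ (n+i,j))"
      unfolding sum_split2 sum.distrib ..
    also have "\<dots> = (\<Sum>i<n. y k * (x i * A $$ (i,j)))"
    proof (rule sum.cong[OF refl])
      fix i assume "i \<in> {..<n}"
      hence i: "i < n" by simp
      have "z i * M $$ (i,j) + z (n+i) * M $$ (n+i,j) = y k * x i * (A $$ (i,j) - D $$ (i,j)) + x k * y i * D $$ (i,j)"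
        using i True unfolding z_def by (simp add: Mij)
      also have "\<dots> = y k * (x i * A $$ (i,j))"
        using Dk[OF i True] by (cases "i = k") (auto simp: algebra_simps)
      finally show "z i * M $$ (i,j) + z (n+i) * M $$ (n+i,j) = y k * (x i * A $$ (i,j))" .
    qed
    also have "\<dots> = y k * (\<Sum>i<n. x i * A $$ (i,j))" by (simp add: sum_distrib_left)
    also have "\<dots> < y k * x j" using xA[OF True] yk by simp
    also have "\<dots> = z j" using True unfolding z_def by simp
    finally show ?thesis .
  next
    case False
    define j' where "j' = j - n"
    have j': "j' < n" "j = n + j'" using j False unfolding j'_def by auto
    have "(\<Sum>i<n+n. z i * M $$ (i,j)) = (\<Sum>i<n. z i * M $$ (i,j) + z (n+i) * M $$ (n+i,j))"
      unfolding sum_split2 sum.distrib ..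
    also have "\<dots> = (\<Sum>i<n. x k * (y i * B $$ (i,j')))"
    proof (rule sum.cong[OF refl])
      fix i assume "i \<in> {..<n}"
      hence i: "i < n" by simp
      have "z i * M $$ (i,j) + z (n+i) * M $$ (n+i,j) = y k * x i * D $$ (i,j') + x k * y i * (B $$ (i,j') - D $$ (i,j'))"
        using i j' unfolding z_def by (simp add: Mij)
      also have "\<dots> = x k * (y i * B $$ (i,j'))"
        using Dk[OF i j'(1)] by (cases "i = k") (auto simp: algebra_simps)
      finally show "z i * M $$ (i,j) + z (n+i) * M $$ (n+i,j) = x k * (y i * B $$ (i,j'))" .
    qed
    also have "\<dots> = x k * (\<Sum>i<n. y i * B $$ (i,j'))" by (simp add: sum_distrib_left)
    also have "\<dots> < x k * y j'" using yB[OF j'(1)] xk by simp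
    also have "\<dots> = z j" using j' unfolding z_def by simp
    finally show ?thesis .
  qed
  have "schur_stable M" by (rule stable_from_vec[OF M _ nM zpos zM]) (use n in auto)
  thus ?thesis unfolding M_def .
qed

end
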